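(* Let $k,s$ be positive integers with $s\equiv 0 \pmod k$ and $s\equiv 0\pmod{k+1}$, put $r=1+k+s$, and let $G=\mathbb{Z}/r\mathbb{Z}\subset SL_3(\mathbb{C})$ be the cyclic group of type $\frac1r(1,k,s)$. Let $\Sigma$ be the triangulation of the junior simplex giving the fan of $Y=G\text{-}\mathrm{Hilb}(\mathbb{C}^3)$. If a character $\chi_c$ ($c\in\{0,1,\dots,r-1\}$) marks some internal edge of $\Sigma$ (in the sense of Reid's recipe), then $c$ satisfies at least one of the following: (i) $1\le c\le k+1$; (ii) $k\mid c$; (iii) $(k+1)\mid c$.
   Context: Setup. Let $\varepsilon=e^{2\pi i/r}$ and let $G=\mathbb{Z}/r\mathbb{Z}$ act on $\mathbb{C}^3$ (coordinates $x,y,z$) via the generator $g=\mathrm{diag}(\varepsilon,\varepsilon^k,\varepsilon^s)$; this is the group "of type $\frac1r(1,k,s)$". For $c\in\mathbb{Z}/r\mathbb{Z}$ let $\chi_c:G\to\mathbb{C}^*$ be the character $g\mapsto\varepsilon^c$; a Laurent monomial $x^ay^bz^d$ is said to have character $\chi_{a+kb+sd \bmod r}$. $Y=G\text{-}\mathrm{Hilb}(\mathbb{C}^3)$ is the fine moduli space of $G$-clusters ($G$-invariant zero-dimensional subschemes $Z\subset\mathbb{C}^3$ with $H^0(\mathcal{O}_Z)$ the regular representation); it is a toric crepant resolution of $\mathbb{C}^3/G$. Toric data. Let $N=\mathbb{Z}^3+\mathbb{Z}\cdot\frac1r(1,k,s)\subset\mathbb{R}^3$ and $M=\mathrm{Hom}(N,\mathbb{Z})$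 (the lattice of exponents of $G$-invariant Laurent monomials). The junior simplex $\triangle$ is the triangle with vertices $e_x=(1,0,0),e_y=(0,1,0),e_z=(0,0,1)$; its lattice points are $e_x,e_y,e_z$ and the points $v_j=\frac1r(j\bmod r,\ kj\bmod r,\ sj\bmod r)$, $1\le j\le r-1$, whose coordinates sum to $1$. The fan of $Y$ consists of the cones over the triangles of a triangulation $\Sigma$ of $\triangle$ into basic triangles whose vertices are all lattice points of $\triangle$ (the $G$-Hilb triangulation). An edge of $\Sigma$ is internal if it is not contained in the boundary of $\triangle$. Reid's recipe (edge marking). For an internal edge with endpoints $e,f$, the rank-one sublattice of $M$ orthogonal to $e$ and $f$ is generated by the exponent vector of $m_1/m_2$ where $m_1,m_2$ are coprime (ordinary) monomials; $m_1$ and $m_2$ have the same character $\chi$, and the edge is said to be marked by $\chi$. *)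

theory Defs
  imports Complex_Main
begin

(* Integer triples: exponent vectors (a,b,d) of Laurent monomials x^a y^b z^d,
   and integer representatives r*v of lattice points v of the junior simplex. *)
type_synonym ivec = "int \<times> int \<times> int"
type_synonym rvec = "real \<times> real \<times> real"

definition rr :: "nat \<Rightarrow> nat \<Rightarrow> nat" where
  "rr k s = 1 + k + s"

definition chr :: "nat \<Rightarrow> nat \<Rightarrow> ivec \<Rightarrow> int" where
  "chr k s m = (case m of (a, b, d) \<Rightarrow> (a + int k * b + int s * d) mod int (rr k s))"

(* lattice points of the junior simplex, scaled by r so that they are integral *)
definition junior_points :: "nat \<Rightarrow> nat \<Rightarrow> ivec set" where
  "junior_points k s =
     {(int (rr k s), 0, 0), (0, int (rr k s), 0), (0, 0, int (rr k s))} \<union>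
     {(int j mod int (rr k s), (int k * int j) mod int (rr k s), (int s * int j) mod int (rr k s))
       | j. 1 \<le> j \<and> j \<le> rr k s - 1}"

definition idot :: "ivec \<Rightarrow> ivec \<Rightarrow> int" where
  "idot u v = (case u of (a, b, d) \<Rightarrow> case v of (a', b', d') \<Rightarrow> a * a' + b * b' + d * d')"

definition rdot :: "rvec \<Rightarrow> ivec \<Rightarrow> real" where
  "rdot v m = (case v of (a, b, d) \<Rightarrow> case m of (a', b', d') \<Rightarrow>
                 a * of_int a' + b * of_int b' + d * of_int d')"

definition nonneg_ivec :: "ivec \<Rightarrow> bool" where
  "nonneg_ivec m = (case m of (a, b, d) \<Rightarrow> 0 \<le> a \<and> 0 \<le> b \<and> 0 \<le> d)"

definition ile :: "ivec \<Rightarrow> ivec \<Rightarrow> bool" where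
  "ile m n = (case m of (a, b, d) \<Rightarrow> case n of (a', b', d') \<Rightarrow> a \<le> a' \<and> b \<le> b' \<and> d \<le> d')"

definition G_graph :: "nat \<Rightarrow> nat \<Rightarrow> ivec set \<Rightarrow> bool" where
  "G_graph k s \<Gamma> =
     ((\<forall>m\<in>\<Gamma>. nonneg_ivec m) \<and>
      (\<forall>m\<in>\<Gamma>. \<forall>m'. nonneg_ivec m' \<and> ile m' m \<longrightarrow> m' \<in> \<Gamma>) \<and>
      bij_betw (chr k s) \<Gamma> {0..<int (rr k s)})"

definition wt :: "nat \<Rightarrow> nat \<Rightarrow> ivec set \<Rightarrow> ivec \<Rightarrow> ivec" where
  "wt k s \<Gamma> m = (THE g. g \<in> \<Gamma> \<and> chr k s g = chr k s m)"

definition gcone :: "nat \<Rightarrow> nat \<Rightarrow> ivec set \<Rightarrow> rvec set" where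
  "gcone k s \<Gamma> = {v. (case v of (a, b, d) \<Rightarrow> 0 \<le> a \<and> 0 \<le> b \<and> 0 \<le> d) \<and>
       (\<forall>m. nonneg_ivec m \<longrightarrow> rdot v (wt k s \<Gamma> m) \<le> rdot v m)}"

definition ivec_to_rvec :: "ivec \<Rightarrow> rvec" where
  "ivec_to_rvec p = (case p of (a, b, d) \<Rightarrow> (of_int a, of_int b, of_int d))"

definition tcone :: "ivec \<Rightarrow> ivec \<Rightarrow> ivec \<Rightarrow> rvec set" where
  "tcone P Q W = {v. \<exists>\<alpha> \<beta> \<gamma> :: real. 0 \<le> \<alpha> \<and> 0 \<le> \<beta> \<and> 0 \<le> \<gamma> \<and>
       (case ivec_to_rvec P of (p1, p2, p3) \<Rightarrow> case ivec_to_rvec Q of (q1, q2, q3) \<Rightarrow>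
        case ivec_to_rvec W of (w1, w2, w3) \<Rightarrow>
          v = (\<alpha> * p1 + \<beta> * q1 + \<gamma> * w1, \<alpha> * p2 + \<beta> * q2 + \<gamma> * w2, \<alpha> * p3 + \<beta> * q3 + \<gamma> * w3))}"

definition idet :: "ivec \<Rightarrow> ivec \<Rightarrow> ivec \<Rightarrow> int" where
  "idet P Q W = (case P of (p1, p2, p3) \<Rightarrow> case Q of (q1, q2, q3) \<Rightarrow> case W of (w1, w2, w3) \<Rightarrow>
     p1 * (q2 * w3 - q3 * w2) - p2 * (q1 * w3 - q3 * w1) + p3 * (q1 * w2 - q2 * w1))"

(* triangles of the G-Hilb triangulation Sigma: the maximal cones of the fan of
   G-Hilb(C^3) are the full-dimensional cones sigma(Gamma), Gamma a G-graph *)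
definition ghilb_triangle :: "nat \<Rightarrow> nat \<Rightarrow> ivec \<Rightarrow> ivec \<Rightarrow> ivec \<Rightarrow> bool" where
  "ghilb_triangle k s P Q W =
     (P \<in> junior_points k s \<and> Q \<in> junior_points k s \<and> W \<in> junior_points k s \<and>
      idet P Q W \<noteq> 0 \<and>
      (\<exists>\<Gamma>. G_graph k s \<Gamma> \<and> gcone k s \<Gamma> = tcone P Q W))"

definition ghilb_edge :: "nat \<Rightarrow> nat \<Rightarrow> ivec \<Rightarrow> ivec \<Rightarrow> bool" where
  "ghilb_edge k s P Q = (\<exists>W. ghilb_triangle k s P Q W)"

(* an edge is internal iff it is not contained in a side of the junior simplex,
   i.e. its endpoints do not share a zero coordinate *)
definition internal_edge :: "ivec \<Rightarrow> ivec \<Rightarrow> bool" where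
  "internal_edge P Q = (case P of (p1, p2, p3) \<Rightarrow> case Q of (q1, q2, q3) \<Rightarrow>
      \<not> ((p1 = 0 \<and> q1 = 0) \<or> (p2 = 0 \<and> q2 = 0) \<or> (p3 = 0 \<and> q3 = 0)))"

definition pos_part :: "ivec \<Rightarrow> ivec" where
  "pos_part u = (case u of (a, b, d) \<Rightarrow> (max a 0, max b 0, max d 0))"

definition iscale :: "int \<Rightarrow> ivec \<Rightarrow> ivec" where
  "iscale n u = (case u of (a, b, d) \<Rightarrow> (n * a, n * b, n * d))"

(* M = invariant exponent vectors;
   u generates M \<inter> {P,Q}^perp; m1 = x^(u+), m2 = x^(u-) coprime, m1/m2 = x^u;
   the marking character is that of m1. *)
definition marks :: "nat \<Rightarrow> nat \<Rightarrow> nat \<Rightarrow> ivec \<Rightarrow> ivec \<Rightarrow> bool" where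
  "marks k s c P Q =
     (\<exists>u. u \<noteq> (0, 0, 0) \<and> chr k s u = 0 \<and> idot u P = 0 \<and> idot u Q = 0 \<and>
        (\<forall>w. chr k s w = 0 \<and> idot w P = 0 \<and> idot w Q = 0 \<longrightarrow> (\<exists>n. w = iscale n u)) \<and>
        chr k s (pos_part u) = int c)"

end

theory Submission
  imports Defs
begin


definition mn :: "nat \<Rightarrow> nat \<Rightarrow> ivec \<Rightarrow> ivec \<Rightarrow> bool" where
  "mn k s v x = (nonneg_ivec x \<and> (\<forall>m. nonneg_ivec m \<and> chr k s m = chr k s x \<longrightarrow> idot v x \<le> idot v m))"

lemma chr_eq_iff: "chr k s (a,b,d) = chr k s (a',b',d') \<longleftrightarrow>
   int (rr k s) dvd (a + int k * b + int s * d) - (a' + int k * b' + int s * d')"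
  unfolding chr_def by (simp add: mod_eq_dvd_iff)

lemma mn_eq: "mn k s v x \<Longrightarrow> mn k s v y \<Longrightarrow> chr k s x = chr k s y \<Longrightarrow> idot v x = idot v y"
  unfolding mn_def by (metis order_antisym)

lemma mn_div:
  assumes "mn k s v (x1,x2,x3)" "0 \<le> y1" "0 \<le> y2" "0 \<le> y3" "y1 \<le> x1" "y2 \<le> x2" "y3 \<le> x3"
  shows "mn k s v (y1,y2,y3)"
proof -
  obtain v1 v2 v3 where v: "v = (v1,v2,v3)" by (cases v) auto
  have x: "\<And>m1 m2 m3. 0 \<le> m1 \<Longrightarrow> 0 \<le> m2 \<Longrightarrow> 0 \<le> m3 \<Longrightarrow> chr k s (m1,m2,m3) = chr k s (x1,x2,x3)
     \<Longrightarrow> v1*x1+v2*x2+v3*x3 \<le> v1*m1+v2*m2+v3*m3"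
    using assms(1) unfolding mn_def v by (auto simp: nonneg_ivec_def idot_def)
  show ?thesis unfolding mn_def v
  proof (intro conjI allI impI)
    show "nonneg_ivec (y1,y2,y3)" using assms by (simp add: nonneg_ivec_def)
    fix m assume h: "nonneg_ivec m \<and> chr k s m = chr k s (y1, y2, y3)"
    obtain m1 m2 m3 where m: "m = (m1,m2,m3)" by (cases m) auto
    have "chr k s (m1 + x1 - y1, m2 + x2 - y2, m3 + x3 - y3) = chr k s (x1,x2,x3)"
      using h unfolding m chr_eq_iff
      by (metis (no_types, lifting) add_diff_cancel_left' diff_diff_eq2 diff_add_eq ring_distribs(1) right_diff_distrib' add_diff_eq)
    then have "v1*x1+v2*x2+v3*x3 \<le> v1*(m1 + x1 - y1)+v2*(m2 + x2 - y2)+v3*(m3 + x3 - y3)"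
      using h assms by (intro x) (auto simp: m nonneg_ivec_def)
    then show "idot (v1, v2, v3) (y1, y2, y3) \<le> idot (v1, v2, v3) m"
      by (simp add: idot_def m algebra_simps)
  qed
qed

lemma rr_int: "int (rr k s) = 1 + int k + int s" by (simp add: rr_def)

lemma idot_comm: "idot u v = idot v u"
  by (cases u; cases v) (simp add: idot_def algebra_simps)

lemma arith_xy:
  fixes k s :: nat and a1 a3 b2 b3 :: int and P Q :: ivec
  assumes k: "0 < k" and s: "s = k * (k+1) * t"
    and nn: "0 < a1" "0 \<le> a3" "0 < b2" "0 \<le> b3" and dj: "a3 = 0 \<or> b3 = 0"
    and chrAB: "chr k s (a1,0,a3) = chr k s (0,b2,b3)"
    and mPA: "mn k s P (a1,0,a3)" and mPB: "mn k s P (0,b2,b3)"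
    and mQA: "mn k s Q (a1,0,a3)" and mQB: "mn k s Q (0,b2,b3)"
    and gen: "\<forall>w. chr k s w = 0 \<and> idot w P = 0 \<and> idot w Q = 0 \<longrightarrow> (\<exists>n. w = iscale n (a1, - b2, a3 - b3))"
  shows "(1 \<le> chr k s (a1,0,a3) \<and> chr k s (a1,0,a3) \<le> int k + 1) \<or> int k dvd chr k s (a1,0,a3)
         \<or> int (k+1) dvd chr k s (a1,0,a3)"
proof -
  define R where "R = int (rr k s)"
  have R: "R = 1 + int k + int s" unfolding R_def rr_int ..
  obtain p1 p2 p3 where P: "P = (p1,p2,p3)" by (cases P) auto
  obtain q1 q2 q3 where Q: "Q = (q1,q2,q3)" by (cases Q) auto
  show ?thesis
  proof (cases "a3 = 0")
    case False
    then have b3: "b3 = 0" using dj by auto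
    show ?thesis
    proof (cases "int k * b2 \<le> int s")
      case True
      have "chr k s (0,b2,b3) = int k * b2" unfolding chr_def b3 using True nn
        by (simp add: rr_int)
      then show ?thesis using chrAB by simp
    next
      case False
      have "int k * ((int k+1) * int t) < int k * b2" using False s by (simp add: algebra_simps)
      then have bb: "(int k+1) * int t < b2" using k by (simp add: mult_less_cancel_left)
      define T where "T = (int k+1) * int t"
      have T0: "0 \<le> T" unfolding T_def by simp
      have c1: "chr k s (0,0,1) = chr k s (0,T,0)" unfolding chr_eq_iff T_def s by (simp add: algebra_simps)
      have "a3 \<ge> 1" using nn \<open>a3 \<noteq> 0\<close> by simp
      then have z: "mn k s v (0,0,1)" if "mn k s v (a1,0,a3)" for v
        using mn_div[OF that] nn by auto
      have y: "mn k s v (0,T,0)" if "mn k s v (0,b2,b3)" for v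
        using mn_div[OF that] nn bb T0 b3 unfolding T_def by auto
      have eP: "idot P (0,0,1) = idot P (0,T,0)" using mn_eq[OF z[OF mPA] y[OF mPB] c1] .
      have eQ: "idot Q (0,0,1) = idot Q (0,T,0)" using mn_eq[OF z[OF mQA] y[OF mQB] c1] .
      have "chr k s (0,-T,1) = 0" unfolding chr_def T_def s by (simp add: algebra_simps)
      moreover have "idot (0,-T,1) P = 0" "idot (0,-T,1) Q = 0" using eP eQ
        by (simp_all add: idot_def P Q)
      ultimately obtain n where "(0,-T,1) = iscale n (a1, - b2, a3 - b3)" using gen by blast
      then have "0 = n * a1" "1 = n * (a3 - b3)" by (auto simp: iscale_def)
      then show ?thesis using nn by simp
    qed
  next
    case True
    show ?thesis
    proof (cases "a1 < int k")
      case lt: True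
      have "chr k s (a1,0,a3) = a1" unfolding chr_def True using lt nn by (simp add: rr_int)
      then show ?thesis using lt nn by simp
    next
      case False
      have c1: "chr k s (int k,0,0) = chr k s (0,1,0)" unfolding chr_eq_iff by simp
      have x: "mn k s v (int k,0,0)" if "mn k s v (a1,0,a3)" for v
        using mn_div[OF that] nn False by auto
      have y: "mn k s v (0,1,0)" if "mn k s v (0,b2,b3)" for v
        using mn_div[OF that] nn by auto
      have eP: "idot P (int k,0,0) = idot P (0,1,0)" using mn_eq[OF x[OF mPA] y[OF mPB] c1] .
      have eQ: "idot Q (int k,0,0) = idot Q (0,1,0)" using mn_eq[OF x[OF mQA] y[OF mQB] c1] .
      have "chr k s (int k,-1,0) = 0" unfolding chr_def by simp
      moreover have "idot (int k,-1,0) P = 0" "idot (int k,-1,0) Q = 0" using eP eQ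
        by (simp_all add: idot_def P Q algebra_simps)
      ultimately obtain n where "(int k,-1,0) = iscale n (a1, - b2, a3 - b3)" using gen by blast
      then have h: "int k = n * a1" "-1 = n * (- b2)" by (auto simp: iscale_def)
      then have "n * b2 = 1" by simp
      then have "n = 1" using nn by (metis zero_less_mult_pos2 zero_less_one pos_zmult_eq_1_iff)
      then have "a1 = int k" using h by simp
      then have "chr k s (a1,0,a3) = int k" unfolding chr_def True by (simp add: rr_int)
      then show ?thesis by simp
    qed
  qed
qed

lemma chr_z_dvd:
  assumes s: "s = k * (k+1) * t"
  shows "int (k+1) dvd chr k s (0,0,d)"
proof -
  have "int (rr k s) = (int k + 1) * (1 + int k * int t)" unfolding rr_int s by (simp add: algebra_simps)
  then have "int (k+1) dvd int (rr k s)" by (simp add: add.commute)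
  moreover have "int s * d = (int k + 1) * (int k * int t * d)" unfolding s by (simp add: algebra_simps)
  then have "int (k+1) dvd int s * d" by (metis dvd_triv_left of_nat_Suc add.commute Suc_eq_plus1)
  ultimately show ?thesis unfolding chr_def by (simp add: dvd_mod_iff)
qed

definition allowed :: "nat \<Rightarrow> int \<Rightarrow> bool" where
  "allowed k c = ((1 \<le> c \<and> c \<le> int k + 1) \<or> int k dvd c \<or> int (k+1) dvd c)"

lemma arith_main:
  fixes k s :: nat and u1 u2 u3 :: int and P Q :: ivec
  assumes k: "0 < k" and s: "s = k * (k+1) * t"
    and chru: "chr k s (u1,u2,u3) = 0"
    and mPA: "mn k s P (max u1 0, max u2 0, max u3 0)" and mPB: "mn k s P (max (-u1) 0, max (-u2) 0, max (-u3) 0)"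
    and mQA: "mn k s Q (max u1 0, max u2 0, max u3 0)" and mQB: "mn k s Q (max (-u1) 0, max (-u2) 0, max (-u3) 0)"
    and gen: "\<forall>w. chr k s w = 0 \<and> idot w P = 0 \<and> idot w Q = 0 \<longrightarrow> (\<exists>n. w = iscale n (u1,u2,u3))"
  shows "allowed k (chr k s (max u1 0, max u2 0, max u3 0))"
proof -
  have chrAB: "chr k s (max u1 0, max u2 0, max u3 0) = chr k s (max (-u1) 0, max (-u2) 0, max (-u3) 0)"
  proof -
    have "int (rr k s) dvd u1 + int k * u2 + int s * u3"
      using chru unfolding chr_def by (simp add: mod_eq_0_iff_dvd)
    moreover have "u1 + int k * u2 + int s * u3 = (max u1 0 + int k * max u2 0 + int s * max u3 0) -
        (max (-u1) 0 + int k * max (-u2) 0 + int s * max (-u3) 0)"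
      by (simp add: max_def algebra_simps)
    ultimately show ?thesis unfolding chr_eq_iff by simp
  qed
  show ?thesis
  proof (cases "u1 > 0 \<and> u2 < 0")
    case True
    have A: "(max u1 0, max u2 0, max u3 0) = (u1, 0, max u3 0)" and B: "(max (-u1) 0, max (-u2) 0, max (-u3) 0) = (0, -u2, max (-u3) 0)"
      using True by auto
    have g: "\<forall>w. chr k s w = 0 \<and> idot w P = 0 \<and> idot w Q = 0 \<longrightarrow> (\<exists>n. w = iscale n (u1, - (-u2), max u3 0 - max (-u3) 0))"
      using gen by (simp add: max_def)
    have dj: "max u3 0 = 0 \<or> max (-u3) 0 = 0" by auto
    have "allowed k (chr k s (u1, 0, max u3 0))"
      using arith_xy[OF k s, of u1 "max u3 0" "-u2" "max (-u3) 0" P Q] True chrAB mPA mPB mQA mQB g dj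
      unfolding A B allowed_def by fastforce
    then show ?thesis unfolding A .
  next
    case F1: False
    show ?thesis
    proof (cases "u1 < 0 \<and> u2 > 0")
      case True
      have A: "(max u1 0, max u2 0, max u3 0) = (0, u2, max u3 0)" and B: "(max (-u1) 0, max (-u2) 0, max (-u3) 0) = (-u1, 0, max (-u3) 0)"
        using True by auto
      have g: "\<forall>w. chr k s w = 0 \<and> idot w P = 0 \<and> idot w Q = 0 \<longrightarrow> (\<exists>n. w = iscale n (-u1, - u2, max (-u3) 0 - max u3 0))"
      proof (intro allI impI)
        fix w assume "chr k s w = 0 \<and> idot w P = 0 \<and> idot w Q = 0"
        then obtain n where "w = iscale n (u1,u2,u3)" using gen by blast
        then have "w = iscale (-n) (-u1, - u2, max (-u3) 0 - max u3 0)"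
          by (simp add: iscale_def max_def)
        then show "\<exists>n. w = iscale n (-u1, - u2, max (-u3) 0 - max u3 0)" by blast
      qed
      have dj: "max (-u3) 0 = 0 \<or> max u3 0 = 0" by auto
      have "allowed k (chr k s (-u1, 0, max (-u3) 0))"
        using arith_xy[OF k s, of "-u1" "max (-u3) 0" "u2" "max u3 0" P Q] True chrAB mPA mPB mQA mQB g dj
        unfolding A B allowed_def by fastforce
      then show ?thesis using chrAB unfolding A B by simp
    next
      case F2: False
      then have "(u1 \<ge> 0 \<and> u2 \<ge> 0) \<or> (u1 \<le> 0 \<and> u2 \<le> 0)" using F1 by auto
      then show ?thesis
      proof
        assume h: "u1 \<ge> 0 \<and> u2 \<ge> 0"
        then have "(max (-u1) 0, max (-u2) 0, max (-u3) 0) = (0, 0, max (-u3) 0)" by auto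
        then show ?thesis using chrAB chr_z_dvd[OF s] unfolding allowed_def by metis
      next
        assume h: "u1 \<le> 0 \<and> u2 \<le> 0"
        then have "(max u1 0, max u2 0, max u3 0) = (0, 0, max u3 0)" by auto
        then show ?thesis using chr_z_dvd[OF s] unfolding allowed_def by metis
      qed
    qed
  qed
qed



lemma junior_bounds:
  assumes "p \<in> junior_points k s"
  shows "0 \<le> fst p \<and> fst p \<le> int (rr k s) \<and> 0 \<le> fst (snd p) \<and> fst (snd p) \<le> int (rr k s)
        \<and> 0 \<le> snd (snd p) \<and> snd (snd p) \<le> int (rr k s)"
proof -
  have R: "0 < int (rr k s)" by (simp add: rr_def)
  have M: "\<And>x. x mod int (rr k s) \<le> int (rr k s)" using R by (simp add: less_imp_le)
  show ?thesis using assms R M unfolding junior_points_def by auto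
qed

lemma indep:
  fixes x y z p1 p2 p3 q1 q2 q3 w1 w2 w3 :: real
  assumes "x*p1 + y*q1 + z*w1 = 0" "x*p2+y*q2+z*w2 = 0" "x*p3 + y*q3 + z*w3 = 0"
  shows "z * (p1*(q2*w3 - q3*w2) - p2*(q1*w3 - q3*w1) + p3*(q1*w2 - q2*w1)) = 0"
proof -
  have e: "z*w1 = -x*p1 - y*q1" "z*w2 = -x*p2 - y*q2" "z*w3 = -x*p3 - y*q3" using assms by algebra+
  have "z * (p1*(q2*w3 - q3*w2) - p2*(q1*w3 - q3*w1) + p3*(q1*w2 - q2*w1))
      = p1*(q2*(z*w3) - q3*(z*w2)) - p2*(q1*(z*w3) - q3*(z*w1)) + p3*(q1*(z*w2) - q2*(z*w1))"
    by (simp add: algebra_simps)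
  also have "\<dots> = 0" unfolding e by (simp add: algebra_simps)
  finally show ?thesis .
qed

lemma G_finite: "G_graph k s \<Gamma> \<Longrightarrow> finite \<Gamma>"
  unfolding G_graph_def using bij_betw_finite by blast

lemma chr_range: "chr k s m \<in> {0..<int (rr k s)}"
proof -
  have R: "0 < int (rr k s)" by (simp add: rr_def)
  show ?thesis unfolding chr_def using R by (cases m) auto
qed

lemma wt_eq:
  assumes G: "G_graph k s \<Gamma>" and g: "g \<in> \<Gamma>" "chr k s g = chr k s m"
  shows "wt k s \<Gamma> m = g"
proof -
  have inj: "inj_on (chr k s) \<Gamma>" using G unfolding G_graph_def bij_betw_def by blast
  show ?thesis unfolding wt_def
    by (rule the_equality) (use g inj in \<open>auto simp: inj_on_def\<close>)
qed

lemma wt_mem: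
  assumes G: "G_graph k s \<Gamma>"
  shows "wt k s \<Gamma> m \<in> \<Gamma> \<and> chr k s (wt k s \<Gamma> m) = chr k s m"
proof -
  have "chr k s ` \<Gamma> = {0..<int (rr k s)}" using G unfolding G_graph_def bij_betw_def by blast
  then obtain g where "g \<in> \<Gamma>" "chr k s g = chr k s m" using chr_range[of k s m] by (metis imageE)
  then show ?thesis using wt_eq[OF G] by metis
qed

lemma rdot_int: "rdot (ivec_to_rvec P) m = of_int (idot P m)"
  by (cases P; cases m) (simp add: rdot_def ivec_to_rvec_def idot_def)

lemma in_gcone_int:
  assumes "ivec_to_rvec P \<in> gcone k s \<Gamma>" "nonneg_ivec m"
  shows "idot P (wt k s \<Gamma> m) \<le> idot P m"
  using assms unfolding gcone_def by (cases m) (auto simp: rdot_int)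

lemma P_tcone: "ivec_to_rvec P \<in> tcone P Q W"
proof -
  obtain p1 p2 p3 where P: "P = (p1,p2,p3)" by (cases P) auto
  obtain q1 q2 q3 where Q: "Q = (q1,q2,q3)" by (cases Q) auto
  obtain w1 w2 w3 where W: "W = (w1,w2,w3)" by (cases W) auto
  show ?thesis unfolding tcone_def P Q W ivec_to_rvec_def
    by (rule CollectI, rule exI[of _ 1], rule exI[of _ 0], rule exI[of _ 0]) simp
qed

lemma Q_tcone: "ivec_to_rvec Q \<in> tcone P Q W"
proof -
  obtain p1 p2 p3 where P: "P = (p1,p2,p3)" by (cases P) auto
  obtain q1 q2 q3 where Q: "Q = (q1,q2,q3)" by (cases Q) auto
  obtain w1 w2 w3 where W: "W = (w1,w2,w3)" by (cases W) auto
  show ?thesis unfolding tcone_def P Q W ivec_to_rvec_def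
    by (rule CollectI, rule exI[of _ 0], rule exI[of _ 1], rule exI[of _ 0]) simp
qed



lemma key_step:
  fixes p1 p2 p3 q1 q2 q3 w1 w2 w3 :: int and \<Gamma> :: "ivec set"
  assumes G: "G_graph k s \<Gamma>"
    and cone: "gcone k s \<Gamma> = tcone (p1,p2,p3) (q1,q2,q3) (w1,w2,w3)"
    and det: "idet (p1,p2,p3) (q1,q2,q3) (w1,w2,w3) \<noteq> 0"
    and v1: "1 \<le> p1 + q1" and v2: "1 \<le> p2 + q2" and v3: "1 \<le> p3 + q3"
    and wb: "0 \<le> w1" "w1 \<le> int (rr k s)" "0 \<le> w2" "w2 \<le> int (rr k s)" "0 \<le> w3" "w3 \<le> int (rr k s)"
  shows "\<exists>m g. nonneg_ivec m \<and> g = wt k s \<Gamma> m \<and> m \<noteq> g \<and>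
           idot (p1+q1, p2+q2, p3+q3) m \<le> idot (p1+q1, p2+q2, p3+q3) g"
proof -
  define R where "R = int (rr k s)"
  have R0: "0 < R" unfolding R_def by (simp add: rr_def)
  define v0 where "v0 = (p1+q1, p2+q2, p3+q3)"
  define K where "K = (\<Sum>g\<in>\<Gamma>. idot v0 g)"
  have fin: "finite \<Gamma>" using G_finite[OF G] .
  have gnn: "nonneg_ivec g" if "g \<in> \<Gamma>" for g using G that unfolding G_graph_def by blast
  have idnn: "0 \<le> idot v0 g" if "g \<in> \<Gamma>" for g
    using gnn[OF that] v1 v2 v3 unfolding v0_def by (cases g) (auto simp: idot_def nonneg_ivec_def)
  have Kg: "idot v0 g \<le> K" if "g \<in> \<Gamma>" for g
    unfolding K_def using fin that idnn by (intro member_le_sum) auto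
  have K0: "0 \<le> K" unfolding K_def using idnn by (simp add: sum_nonneg)
  define \<epsilon> :: real where "\<epsilon> = 1 / (2 * of_int R * (of_int K + 1))"
  have eps0: "0 < \<epsilon>" unfolding \<epsilon>_def using R0 K0 by simp
  define e :: real where "e = \<epsilon> * of_int R"
  have e_eq: "e = 1 / (2 * (of_int K + 1))" unfolding e_def \<epsilon>_def using R0 by simp
  have e0: "0 < e" using e_eq K0 by simp
  have "1 / (2 * (of_int K + 1)) \<le> 1 / (2::real)" by (rule divide_left_mono) (use K0 in auto)
  then have ehalf: "e \<le> 1/2" using e_eq by simp
  define ve :: rvec where "ve = (of_int (p1+q1) - \<epsilon> * of_int w1, of_int (p2+q2) - \<epsilon> * of_int w2, of_int (p3+q3) - \<epsilon> * of_int w3)"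
  have ew: "\<epsilon> * of_int wi \<le> 1/2" if "0 \<le> wi" "wi \<le> R" for wi
  proof -
    have "\<epsilon> * of_int wi \<le> \<epsilon> * of_int R" using that eps0 by (simp add: mult_left_mono)
    then show ?thesis using ehalf unfolding e_def by simp
  qed
  have ve_nn: "(case ve of (a, b, d) \<Rightarrow> 0 \<le> a \<and> 0 \<le> b \<and> 0 \<le> d)"
    using ew[of w1] ew[of w2] ew[of w3] wb v1 v2 v3 unfolding ve_def R_def by simp
  have ve_not: "ve \<notin> tcone (p1,p2,p3) (q1,q2,q3) (w1,w2,w3)"
  proof
    assume "ve \<in> tcone (p1,p2,p3) (q1,q2,q3) (w1,w2,w3)"
    then obtain \<alpha> \<beta> \<gamma> :: real where g0: "0 \<le> \<gamma>" and
      eq: "ve = (\<alpha> * p1 + \<beta> * q1 + \<gamma> * w1, \<alpha> * p2 + \<beta> * q2 + \<gamma> * w2, \<alpha> * p3 + \<beta> * q3 + \<gamma> * w3)"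
      unfolding tcone_def ivec_to_rvec_def by auto
    have "(\<alpha> - 1) * p1 + (\<beta> - 1) * q1 + (\<gamma> + \<epsilon>) * w1 = 0"
         "(\<alpha> - 1) * p2 + (\<beta> - 1) * q2 + (\<gamma> + \<epsilon>) * w2 = 0"
         "(\<alpha> - 1) * p3 + (\<beta> - 1) * q3 + (\<gamma> + \<epsilon>) * w3 = 0"
      using eq unfolding ve_def by (auto simp: algebra_simps)
    from indep[OF this] have "(\<gamma> + \<epsilon>) * of_int (idet (p1,p2,p3) (q1,q2,q3) (w1,w2,w3)) = 0"
      by (simp add: idet_def)
    then show False using det g0 eps0 by simp
  qed
  then have "ve \<notin> gcone k s \<Gamma>" using cone by simp
  then obtain m where mnn: "nonneg_ivec m" and lt: "\<not> rdot ve (wt k s \<Gamma> m) \<le> rdot ve m"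
    using ve_nn unfolding gcone_def by blast
  define g where "g = wt k s \<Gamma> m"
  have gG: "g \<in> \<Gamma>" using wt_mem[OF G] unfolding g_def by blast
  obtain m1 m2 m3 where m: "m = (m1,m2,m3)" by (cases m) auto
  obtain g1 g2 g3 where gg: "g = (g1,g2,g3)" by (cases g) auto
  have mn: "0 \<le> m1" "0 \<le> m2" "0 \<le> m3" using mnn m by (auto simp: nonneg_ivec_def)
  have gn: "0 \<le> g1" "0 \<le> g2" "0 \<le> g3" using gnn[OF gG] gg by (auto simp: nonneg_ivec_def)
  define Vm :: real where "Vm = of_int (idot v0 m)"
  define Vg :: real where "Vg = of_int (idot v0 g)"
  define Wm :: real where "Wm = of_int (w1*m1 + w2*m2 + w3*m3)"
  define Wg :: real where "Wg = of_int (w1*g1 + w2*g2 + w3*g3)"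
  define S :: real where "S = of_int (m1 + m2 + m3)"
  have lt': "\<not> rdot ve (g1,g2,g3) \<le> rdot ve (m1,m2,m3)" using lt gg m unfolding g_def by simp
  have ineq: "Vm - \<epsilon> * Wm < Vg - \<epsilon> * Wg"
    using lt' unfolding Vm_def Vg_def Wm_def Wg_def ve_def v0_def m gg
    by (simp add: rdot_def idot_def algebra_simps)
  have Wg0: "0 \<le> Wg" unfolding Wg_def using gn wb by simp
  have WmS: "Wm \<le> of_int R * S"
  proof -
    have "w1*m1 + w2*m2 + w3*m3 \<le> R*m1 + R*m2 + R*m3"
      using wb mn unfolding R_def by (intro add_mono mult_right_mono) auto
    then show ?thesis unfolding Wm_def S_def by (simp add: algebra_simps flip: of_int_mult of_int_add of_int_le_iff)
  qed
  have SV: "S \<le> Vm"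
  proof -
    have "m1 + m2 + m3 \<le> (p1+q1)*m1 + (p2+q2)*m2 + (p3+q3)*m3"
      using v1 v2 v3 mn by (intro add_mono) (metis mult_1 mult_right_mono)+
    then show ?thesis unfolding S_def Vm_def v0_def m idot_def by (simp only: of_int_le_iff prod.case)
  qed
  have VgK: "Vg \<le> of_int K" unfolding Vg_def using Kg[OF gG] by simp
  have S0: "0 \<le> S" unfolding S_def using mn by simp
  have a1: "\<epsilon> * Wm \<le> e * S" using mult_left_mono[OF WmS, of \<epsilon>] eps0 unfolding e_def by (simp add: mult.assoc)
  have a2: "e * S \<le> e * Vm" using mult_left_mono[OF SV, of e] e0 by simp
  have Vm0: "0 \<le> Vm" using S0 SV by simp
  have a3: "e * Vm \<le> Vm / 2" using mult_right_mono[OF ehalf Vm0] by simp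
  have Wg': "0 \<le> \<epsilon> * Wg" using eps0 Wg0 by simp
  have VmK: "Vm < 2 * of_int K" using ineq a1 a2 a3 VgK Wg' by linarith
  have a4: "e * Vm < e * (2 * of_int K)" using mult_strict_left_mono[OF VmK e0] .
  have a5: "e * (2 * of_int K) < 1" using e_eq K0 e0 by (simp add: field_simps)
  have "Vm - Vg < 1" using ineq a1 a2 a4 a5 Wg' by linarith
  then have "idot v0 m - idot v0 g < 1" unfolding Vm_def Vg_def by linarith
  then have D: "idot v0 m \<le> idot v0 g" by simp
  have neq: "m \<noteq> g" using ineq unfolding Wm_def Wg_def Vm_def Vg_def m gg by auto
  show ?thesis using mnn D neq unfolding v0_def g_def by blast
qed



lemma bnd_pos: fixes gi mi n ui :: int
  assumes "0 \<le> gi" "1 \<le> n" "0 \<le> mi" "mi - gi = n*ui" shows "max (-ui) 0 \<le> gi"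
proof (cases "ui < 0")
  case True
  have "n * ui \<le> 1 * ui" using assms True by (intro mult_right_mono_neg) auto
  then show ?thesis using assms by simp
qed (use assms in auto)

lemma bnd_neg: fixes gi mi n ui :: int
  assumes "0 \<le> gi" "n \<le> -1" "0 \<le> mi" "mi - gi = n*ui" shows "max ui 0 \<le> gi"
proof (cases "ui > 0")
  case True
  have "n * ui \<le> (-1) * ui" using assms True by (intro mult_right_mono) auto
  then show ?thesis using assms by simp
qed (use assms in auto)

lemma chr_AB: "chr k s (u1,u2,u3) = 0 \<Longrightarrow>
  chr k s (max u1 0, max u2 0, max u3 0) = chr k s (max (-u1) 0, max (-u2) 0, max (-u3) 0)"
proof -
  assume chru: "chr k s (u1,u2,u3) = 0"
  have "int (rr k s) dvd u1 + int k * u2 + int s * u3"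
    using chru unfolding chr_def by (simp add: mod_eq_0_iff_dvd)
  moreover have "u1 + int k * u2 + int s * u3 = (max u1 0 + int k * max u2 0 + int s * max u3 0) -
      (max (-u1) 0 + int k * max (-u2) 0 + int s * max (-u3) 0)"
    by (simp add: max_def algebra_simps)
  ultimately show ?thesis unfolding chr_eq_iff by simp
qed

lemma mn_of_mem:
  assumes G: "G_graph k s \<Gamma>" and a: "a \<in> \<Gamma>" and P: "ivec_to_rvec P \<in> gcone k s \<Gamma>"
  shows "mn k s P a"
  unfolding mn_def
proof (intro conjI allI impI)
  show "nonneg_ivec a" using G a unfolding G_graph_def by blast
  fix m assume h: "nonneg_ivec m \<and> chr k s m = chr k s a"
  have "wt k s \<Gamma> m = a" using wt_eq[OF G a] h by simp
  then show "idot P a \<le> idot P m" using in_gcone_int[OF P] h by metis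
qed

lemma mn_transfer:
  assumes "mn k s v a" "nonneg_ivec b" "chr k s b = chr k s a" "idot v b = idot v a"
  shows "mn k s v b"
  using assms unfolding mn_def by auto

lemma nonneg_max: "nonneg_ivec (max u1 0, max u2 0, max u3 0)"
  by (simp add: nonneg_ivec_def)

lemma derive_mn:
  fixes k s :: nat and P Q :: ivec and u1 u2 u3 :: int
  assumes edge: "ghilb_edge k s P Q" and int: "internal_edge P Q"
    and chru: "chr k s (u1,u2,u3) = 0" and uP: "idot (u1,u2,u3) P = 0" and uQ: "idot (u1,u2,u3) Q = 0"
    and gen: "\<forall>w. chr k s w = 0 \<and> idot w P = 0 \<and> idot w Q = 0 \<longrightarrow> (\<exists>n. w = iscale n (u1,u2,u3))"
  shows "mn k s P (max u1 0, max u2 0, max u3 0) \<and> mn k s P (max (-u1) 0, max (-u2) 0, max (-u3) 0) \<and>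
         mn k s Q (max u1 0, max u2 0, max u3 0) \<and> mn k s Q (max (-u1) 0, max (-u2) 0, max (-u3) 0)"
proof -
  obtain W \<Gamma> where PJ: "P \<in> junior_points k s" and QJ: "Q \<in> junior_points k s" and WJ: "W \<in> junior_points k s"
    and det: "idet P Q W \<noteq> 0" and G: "G_graph k s \<Gamma>" and cone: "gcone k s \<Gamma> = tcone P Q W"
    using edge unfolding ghilb_edge_def ghilb_triangle_def by blast
  obtain p1 p2 p3 where P: "P = (p1,p2,p3)" by (cases P) auto
  obtain q1 q2 q3 where Q: "Q = (q1,q2,q3)" by (cases Q) auto
  obtain w1 w2 w3 where W: "W = (w1,w2,w3)" by (cases W) auto
  have pb: "0 \<le> p1" "0 \<le> p2" "0 \<le> p3" using junior_bounds[OF PJ] P by auto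
  have qb: "0 \<le> q1" "0 \<le> q2" "0 \<le> q3" using junior_bounds[OF QJ] Q by auto
  have wb: "0 \<le> w1" "w1 \<le> int (rr k s)" "0 \<le> w2" "w2 \<le> int (rr k s)" "0 \<le> w3" "w3 \<le> int (rr k s)"
    using junior_bounds[OF WJ] W by auto
  have iv: "1 \<le> p1 + q1" "1 \<le> p2 + q2" "1 \<le> p3 + q3"
    using int pb qb unfolding internal_edge_def P Q by auto
  obtain m g where mnn: "nonneg_ivec m" and g: "g = wt k s \<Gamma> m" and neq: "m \<noteq> g"
    and D: "idot (p1+q1, p2+q2, p3+q3) m \<le> idot (p1+q1, p2+q2, p3+q3) g"
    using key_step[OF G cone[unfolded P Q W] det[unfolded P Q W] iv wb] by blast
  have PC: "ivec_to_rvec P \<in> gcone k s \<Gamma>" using P_tcone cone by simp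
  have QC: "ivec_to_rvec Q \<in> gcone k s \<Gamma>" using Q_tcone cone by simp
  have hP: "idot P g \<le> idot P m" using in_gcone_int[OF PC mnn] g by simp
  have hQ: "idot Q g \<le> idot Q m" using in_gcone_int[OF QC mnn] g by simp
  have gG: "g \<in> \<Gamma>" and chg: "chr k s g = chr k s m" using wt_mem[OF G] g by auto
  obtain m1 m2 m3 where m: "m = (m1,m2,m3)" by (cases m) auto
  obtain g1 g2 g3 where gg: "g = (g1,g2,g3)" by (cases g) auto
  have mn: "0 \<le> m1" "0 \<le> m2" "0 \<le> m3" using mnn m by (auto simp: nonneg_ivec_def)
  have gnn: "nonneg_ivec g" using G gG unfolding G_graph_def by blast
  then have gn: "0 \<le> g1" "0 \<le> g2" "0 \<le> g3" using gg by (auto simp: nonneg_ivec_def)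
  define d where "d = (m1-g1, m2-g2, m3-g3)"
  have dP: "idot d P = 0" and dQ: "idot d Q = 0"
    using D hP hQ unfolding d_def P Q m gg by (auto simp: idot_def algebra_simps)
  have dc: "chr k s d = 0"
  proof -
    have "int (rr k s) dvd (m1 + int k * m2 + int s * m3) - (g1 + int k * g2 + int s * g3)"
      using chg unfolding m gg chr_eq_iff by (metis dvd_diff_commute)
    then show ?thesis unfolding d_def chr_def by (simp add: algebra_simps mod_eq_0_iff_dvd)
  qed
  obtain n where dn: "d = iscale n (u1,u2,u3)" using gen dP dQ dc by blast
  have n0: "n \<noteq> 0" using dn neq unfolding d_def m gg iscale_def by auto
  have e1: "m1 - g1 = n*u1" "m2 - g2 = n*u2" "m3 - g3 = n*u3" using dn unfolding d_def iscale_def by auto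
  define A where "A = (max u1 0, max u2 0, max u3 0)"
  define B where "B = (max (-u1) 0, max (-u2) 0, max (-u3) 0)"
  have chrAB: "chr k s A = chr k s B" unfolding A_def B_def using chr_AB[OF chru] .
  have dotAB: "idot v A = idot v B" if "idot (u1,u2,u3) v = 0" for v
    using that unfolding A_def B_def by (cases v) (simp add: idot_def max_def algebra_simps split: if_splits)
  have downc: "x \<in> \<Gamma>" if "nonneg_ivec x" "ile x g" for x
    using G gG that unfolding G_graph_def by blast
  have "A \<in> \<Gamma> \<or> B \<in> \<Gamma>"
  proof (cases "n > 0")
    case True
    have "ile B g" unfolding B_def gg ile_def using bnd_pos[OF gn(1) _ mn(1) e1(1)]
      bnd_pos[OF gn(2) _ mn(2) e1(2)] bnd_pos[OF gn(3) _ mn(3) e1(3)] True by simp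
    then show ?thesis using downc nonneg_max unfolding B_def by blast
  next
    case False
    then have "n \<le> -1" using n0 by simp
    then have "ile A g" unfolding A_def gg ile_def using bnd_neg[OF gn(1) _ mn(1) e1(1)]
      bnd_neg[OF gn(2) _ mn(2) e1(2)] bnd_neg[OF gn(3) _ mn(3) e1(3)] by simp
    then show ?thesis using downc nonneg_max unfolding A_def by blast
  qed
  moreover have "idot P A = idot P B" "idot Q A = idot Q B" using dotAB uP uQ by auto
  moreover have "nonneg_ivec A" "nonneg_ivec B" unfolding A_def B_def by (rule nonneg_max)+
  ultimately have "mn k s P A \<and> mn k s P B \<and> mn k s Q A \<and> mn k s Q B"
    using mn_of_mem[OF G _ PC] mn_of_mem[OF G _ QC] mn_transfer chrAB by metis
  then show ?thesis unfolding A_def B_def .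
qed



theorem theorem5p3:
  fixes k s c :: nat and P Q :: ivec
  assumes "0 < k" and "0 < s" and "k dvd s" and "(k + 1) dvd s"
    and "c < rr k s"
    and "ghilb_edge k s P Q" and "internal_edge P Q"
    and "marks k s c P Q"
  shows "(1 \<le> c \<and> c \<le> k + 1) \<or> k dvd c \<or> (k + 1) dvd c"
proof -
  have cop: "coprime k (k+1)" by simp
  have "k * (k+1) dvd s" using divides_mult[OF assms(3) assms(4) cop] .
  then obtain t where s: "s = k * (k+1) * t" by (auto elim: dvdE)
  obtain u where u0: "u \<noteq> (0,0,0)" and chu: "chr k s u = 0" and uP: "idot u P = 0" and uQ: "idot u Q = 0"
    and gen: "\<forall>w. chr k s w = 0 \<and> idot w P = 0 \<and> idot w Q = 0 \<longrightarrow> (\<exists>n. w = iscale n u)"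
    and cu: "chr k s (pos_part u) = int c"
    using assms(8) unfolding marks_def by blast
  obtain u1 u2 u3 where u: "u = (u1,u2,u3)" by (cases u) auto
  have mns: "mn k s P (max u1 0, max u2 0, max u3 0) \<and> mn k s P (max (-u1) 0, max (-u2) 0, max (-u3) 0) \<and>
         mn k s Q (max u1 0, max u2 0, max u3 0) \<and> mn k s Q (max (-u1) 0, max (-u2) 0, max (-u3) 0)"
    using derive_mn[OF assms(6) assms(7)] chu uP uQ gen unfolding u by blast
  have "allowed k (chr k s (max u1 0, max u2 0, max u3 0))"
    using arith_main[OF assms(1) s, of u1 u2 u3 P Q] chu mns gen unfolding u by blast
  moreover have "chr k s (max u1 0, max u2 0, max u3 0) = int c" using cu unfolding u pos_part_def by simp
  ultimately have "(1 \<le> int c \<and> int c \<le> int k + 1) \<or> int k dvd int c \<or> int (k+1) dvd int c"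
    unfolding allowed_def by simp
  then show ?thesis by (simp only: of_nat_dvd_iff) auto
qed


end
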